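(* A magma $(Q,\cdot)$ is a double Ward quasigroup (for some element of $Q$) if and only if it is cancellative and has an idempotent $e$ (i.e. $ee=e$) such that $(e\cdot xz)(ey\cdot z)=xy$ for all $x,y,z\in Q$.
   Context: A quasigroup is a magma in which $ax=b$ and $ya=b$ have unique solutions for all $a,b$. A double Ward quasigroup $(Q,\cdot,e)$ is a quasigroup with an element $e$ such that $(ee\cdot xz)(ey\cdot z)=xy$ for all $x,y,z$. A magma is cancellative if it is both left and right cancellative. *)

theory Defs
  imports Main
begin

definition quasigroup :: "('a \<Rightarrow> 'a \<Rightarrow> 'a) \<Rightarrow> bool" where
  "quasigroup m \<longleftrightarrow> (\<forall>a b. (\<exists>!x. m a x = b) \<and> (\<exists>!y. m y a = b))"

definition double_ward_quasigroup :: "('a \<Rightarrow> 'a \<Rightarrow> 'a) \<Rightarrow> 'a \<Rightarrow> bool" where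
  "double_ward_quasigroup m e \<longleftrightarrow> quasigroup m \<and>
     (\<forall>x y z. m (m (m e e) (m x z)) (m (m e y) z) = m x y)"

definition left_cancellative :: "('a \<Rightarrow> 'a \<Rightarrow> 'a) \<Rightarrow> bool" where
  "left_cancellative m \<longleftrightarrow> (\<forall>a x y. m a x = m a y \<longrightarrow> x = y)"

definition right_cancellative :: "('a \<Rightarrow> 'a \<Rightarrow> 'a) \<Rightarrow> bool" where
  "right_cancellative m \<longleftrightarrow> (\<forall>a x y. m x a = m y a \<longrightarrow> x = y)"

definition cancellative :: "('a \<Rightarrow> 'a \<Rightarrow> 'a) \<Rightarrow> bool" where
  "cancellative m \<longleftrightarrow> left_cancellative m \<and> right_cancellative m"

end

theory Submission
  imports Defs
begin

lemma back_right:
  fixes m :: "'a \<Rightarrow> 'a \<Rightarrow> 'a"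
  assumes lc: "\<And>a x y. m a x = m a y \<Longrightarrow> x = y"
  and rc: "\<And>a x y. m x a = m y a \<Longrightarrow> x = y"
  and i: "m e e = e"
  and W: "\<And>x y z. m (m e (m x z)) (m (m e y) z) = m x y"
  shows "\<exists>y. m y p = q"
  by (metis rc i W)

lemma back_left:
  fixes m :: "'a \<Rightarrow> 'a \<Rightarrow> 'a"
  assumes lc: "\<And>a x y. m a x = m a y \<Longrightarrow> x = y"
  and rc: "\<And>a x y. m x a = m y a \<Longrightarrow> x = y"
  and i: "m e e = e"
  and W: "\<And>x y z. m (m e (m x z)) (m (m e y) z) = m x y"
  shows "\<exists>x. m p x = q"
proof -
  have r1: "m e (m x e) = x" for x
    using W[of x e e] i rc by metis
  define w where "w = m (m p e) e"
  have ew: "m e (m e w) = p" unfolding w_def using r1 by simp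
  have "m p (m (m e (m q e)) w) = m e (m q e)"
    using W[where x=e and y="m q e" and z=w] ew by simp
  also have "\<dots> = q" using r1 by simp
  finally show ?thesis by blast
qed

lemma fwd_idem:
  fixes m :: "'a \<Rightarrow> 'a \<Rightarrow> 'a"
  assumes lc: "\<And>a x y. m a x = m a y \<Longrightarrow> x = y"
  and W: "\<And>x y z. m (m (m e e) (m x z)) (m (m e y) z) = m x y"
  shows "m e e = e"
  by (metis W lc)

theorem corollary4p12:
  fixes m :: "'a \<Rightarrow> 'a \<Rightarrow> 'a"
  shows "(\<exists>e. double_ward_quasigroup m e) \<longleftrightarrow>
         (cancellative m \<and>
          (\<exists>e. m e e = e \<and> (\<forall>x y z. m (m e (m x z)) (m (m e y) z) = m x y)))"
proof
  assume "\<exists>e. double_ward_quasigroup m e"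
  then obtain e where q: "quasigroup m" and W: "\<And>x y z. m (m (m e e) (m x z)) (m (m e y) z) = m x y"
    unfolding double_ward_quasigroup_def by blast
  have lc: "\<And>a x y. m a x = m a y \<Longrightarrow> x = y" using q unfolding quasigroup_def by metis
  have rc: "\<And>a x y. m x a = m y a \<Longrightarrow> x = y" using q unfolding quasigroup_def by metis
  have ee: "m e e = e" using fwd_idem[OF lc W] .
  show "cancellative m \<and> (\<exists>e. m e e = e \<and> (\<forall>x y z. m (m e (m x z)) (m (m e y) z) = m x y))"
    unfolding cancellative_def left_cancellative_def right_cancellative_def
    using lc rc ee W by (metis (no_types))
next
  assume A: "cancellative m \<and> (\<exists>e. m e e = e \<and> (\<forall>x y z. m (m e (m x z)) (m (m e y) z) = m x y))"
  then obtain e where i: "m e e = e" and W: "\<And>x y z. m (m e (m x z)) (m (m e y) z) = m x y" by blast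
  have lc: "\<And>a x y. m a x = m a y \<Longrightarrow> x = y" using A
    unfolding cancellative_def left_cancellative_def by blast
  have rc: "\<And>a x y. m x a = m y a \<Longrightarrow> x = y" using A
    unfolding cancellative_def right_cancellative_def by blast
  have "quasigroup m"
    unfolding quasigroup_def
  proof (intro allI conjI)
    fix a b
    have "\<exists>x. m a x = b" by (rule back_left[where m=m and e=e]) (use lc rc i W in blast)+
    then show "\<exists>!x. m a x = b" using lc by blast
    have "\<exists>y. m y a = b" by (rule back_right[where m=m and e=e]) (use lc rc i W in blast)+
    then show "\<exists>!y. m y a = b" using rc by blast
  qed
  then show "\<exists>e. double_ward_quasigroup m e"
    unfolding double_ward_quasigroup_def using i W by metis
qed

end
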